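(* Let $p>2$ be real with $2n\le p\le 2n+1$ for some $n\in\mathbb{N}$, and let $u(x)=e^{ix^p}$, $x\in\mathbb{R}$, where for $x<0$ we set $x^p=e^{i\pi p}|x|^p$ (so $u\in\mathscr{S}'(\mathbb{R})$). Then $$WF(u)\subseteq\{0\}\times(\mathbb{R}\setminus\{0\}).$$
   Context: $WF$ is the Gabor wave front set: for $u\in\mathscr{S}'(\mathbb{R})$, $z_0\in T^*\mathbb{R}\setminus\{0\}$ is not in $WF(u)$ iff there is an open conic set $\Gamma\ni z_0$ with $\sup_{z\in\Gamma}\langle z\rangle^N|V_\varphi u(z)|<\infty$ for all $N\ge0$, where $V_\varphi u(x,\xi)=\int u(y)\overline{\varphi(y-x)}e^{-iy\xi}dy$, $\varphi\in\mathscr{S}(\mathbb{R})\setminus\{0\}$, $\langle z\rangle=(1+|z|^2)^{1/2}$. *)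

theory Defs
  imports "HOL-Analysis.Analysis"
begin

definition schwartz :: "(real \<Rightarrow> complex) \<Rightarrow> bool" where
  "schwartz phi \<longleftrightarrow> (\<exists>D :: nat \<Rightarrow> real \<Rightarrow> complex.
      D 0 = phi \<and>
      (\<forall>k x. (D k has_vector_derivative D (Suc k) x) (at x)) \<and>
      (\<forall>k m. \<exists>C. \<forall>x. \<bar>x\<bar> ^ m * norm (D k x) \<le> C))"

definition jbr :: "real \<times> real \<Rightarrow> real" where
  "jbr z = sqrt (1 + (norm z)\<^sup>2)"

definition stft :: "(real \<Rightarrow> complex) \<Rightarrow> (real \<Rightarrow> complex) \<Rightarrow> real \<times> real \<Rightarrow> complex" where
  "stft phi u z = (LINT y|lborel. u y * cnj (phi (y - fst z)) * exp (- \<i> * complex_of_real (y * snd z)))"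

definition open_conic :: "(real \<times> real) set \<Rightarrow> bool" where
  "open_conic G \<longleftrightarrow> open G \<and> 0 \<notin> G \<and> (\<forall>z\<in>G. \<forall>t>0. t *\<^sub>R z \<in> G)"

definition gabor_WF :: "(real \<Rightarrow> complex) \<Rightarrow> (real \<Rightarrow> complex) \<Rightarrow> (real \<times> real) set" where
  "gabor_WF phi u = {z0. z0 \<noteq> 0 \<and> \<not> (\<exists>G. open_conic G \<and> z0 \<in> G \<and>
      (\<forall>N::real. N \<ge> 0 \<longrightarrow> (\<exists>C. \<forall>z\<in>G. jbr z powr N * norm (stft phi u z) \<le> C)))}"

definition cpow :: "real \<Rightarrow> real \<Rightarrow> complex" where
  "cpow p x = (if x \<ge> 0 then complex_of_real (x powr p)
               else exp (\<i> * complex_of_real (pi * p)) * complex_of_real (\<bar>x\<bar> powr p))"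

definition chirp :: "real \<Rightarrow> real \<Rightarrow> complex" where
  "chirp p x = exp (\<i> * cpow p x)"

end

theory Submission
  imports Defs "HOL-Probability.Sinc_Integral"
begin

definition bnd :: "(real\<times>real) set \<Rightarrow> nat \<Rightarrow> nat \<Rightarrow> (real\<times>real \<Rightarrow> real \<Rightarrow> complex) \<Rightarrow> bool" where
  "bnd W k m f \<longleftrightarrow> (\<exists>C. \<forall>w\<in>W. \<forall>t. \<bar>t\<bar> < 3/4*\<bar>fst w\<bar> \<longrightarrow>
      norm (f w t) * (\<bar>fst w\<bar> ^ k * (1+\<bar>t\<bar>)^m) \<le> C)"

fun sm :: "(real\<times>real) set \<Rightarrow> nat \<Rightarrow> nat \<Rightarrow> nat \<Rightarrow> (real\<times>real \<Rightarrow> real \<Rightarrow> complex) \<Rightarrow> bool" where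
  "sm W 0 k m f = bnd W k m f"
| "sm W (Suc j) k m f = (bnd W k m f \<and> (\<exists>f'. (\<forall>w\<in>W. \<forall>t. \<bar>t\<bar> < 3/4*\<bar>fst w\<bar> \<longrightarrow>
       (f w has_vector_derivative f' w t) (at t)) \<and> sm W j k m f'))"

lemma sm_bnd: "sm W j k m f \<Longrightarrow> bnd W k m f"
  by (cases j) auto

lemma sm_down: "sm W (Suc j) k m f \<Longrightarrow> sm W j k m f"
proof (induction j arbitrary: f)
  case 0 then show ?case by simp
next
  case (Suc j) then show ?case by (metis sm.simps(2))
qed

lemma sm_le: "sm W j k m f \<Longrightarrow> i \<le> j \<Longrightarrow> sm W i k m f"
proof (induction j)
  case 0 then show ?case by simp
next
  case (Suc j) then show ?case
    by (metis le_Suc_eq sm_down)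
qed

lemma bnd_weaken:
  assumes "bnd W k m f" "k' \<le> k" "m' \<le> m" "\<forall>w\<in>W. 1 \<le> \<bar>fst w\<bar>"
  shows "bnd W k' m' f"
proof -
  from assms(1) obtain C where C: "\<forall>w\<in>W. \<forall>t. \<bar>t\<bar> < 3/4*\<bar>fst w\<bar> \<longrightarrow>
      norm (f w t) * (\<bar>fst w\<bar> ^ k * (1+\<bar>t\<bar>)^m) \<le> C" unfolding bnd_def by blast
  have "norm (f w t) * (\<bar>fst w\<bar> ^ k' * (1+\<bar>t\<bar>)^m') \<le> C" if "w\<in>W" "\<bar>t\<bar> < 3/4*\<bar>fst w\<bar>" for w t
  proof -
    have "\<bar>fst w\<bar> ^ k' \<le> \<bar>fst w\<bar> ^ k" using assms that by (intro power_increasing) auto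
    moreover have "(1+\<bar>t\<bar>)^m' \<le> (1+\<bar>t\<bar>)^m" using assms by (intro power_increasing) auto
    ultimately have "\<bar>fst w\<bar> ^ k' * (1+\<bar>t\<bar>)^m' \<le> \<bar>fst w\<bar> ^ k * (1+\<bar>t\<bar>)^m"
      by (intro mult_mono) auto
    then have "norm (f w t) * (\<bar>fst w\<bar> ^ k' * (1+\<bar>t\<bar>)^m') \<le> norm (f w t) * (\<bar>fst w\<bar> ^ k * (1+\<bar>t\<bar>)^m)"
      by (intro mult_left_mono) auto
    then show ?thesis using C that by force
  qed
  then show ?thesis unfolding bnd_def by blast
qed

lemma sm_weaken: "sm W j k m f \<Longrightarrow> k' \<le> k \<Longrightarrow> m' \<le> m \<Longrightarrow> \<forall>w\<in>W. 1 \<le> \<bar>fst w\<bar> \<Longrightarrow> sm W j k' m' f"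
  by (induction j arbitrary: f) (auto intro: bnd_weaken)

lemma bnd_add: "bnd W k m f \<Longrightarrow> bnd W k m g \<Longrightarrow> bnd W k m (\<lambda>w t. f w t + g w t)"
proof -
  assume "bnd W k m f" "bnd W k m g"
  then obtain C D where C: "\<forall>w\<in>W. \<forall>t. \<bar>t\<bar> < 3/4*\<bar>fst w\<bar> \<longrightarrow>
      norm (f w t) * (\<bar>fst w\<bar> ^ k * (1+\<bar>t\<bar>)^m) \<le> C"
    and D: "\<forall>w\<in>W. \<forall>t. \<bar>t\<bar> < 3/4*\<bar>fst w\<bar> \<longrightarrow>
      norm (g w t) * (\<bar>fst w\<bar> ^ k * (1+\<bar>t\<bar>)^m) \<le> D" unfolding bnd_def by blast
  have "norm (f w t + g w t) * (\<bar>fst w\<bar> ^ k * (1+\<bar>t\<bar>)^m) \<le> C + D" if "w\<in>W" "\<bar>t\<bar> < 3/4*\<bar>fst w\<bar>" for w t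
  proof -
    have "norm (f w t + g w t) * (\<bar>fst w\<bar> ^ k * (1+\<bar>t\<bar>)^m) \<le> (norm (f w t) + norm (g w t)) * (\<bar>fst w\<bar> ^ k * (1+\<bar>t\<bar>)^m)"
      by (intro mult_right_mono norm_triangle_ineq) auto
    then show ?thesis using C D that by (simp add: algebra_simps) (smt (verit))
  qed
  then show ?thesis unfolding bnd_def by blast
qed

lemma bnd_mult: "bnd W k m f \<Longrightarrow> bnd W k' m' g \<Longrightarrow> bnd W (k+k') (m+m') (\<lambda>w t. f w t * g w t)"
proof -
  assume "bnd W k m f" "bnd W k' m' g"
  then obtain C D where C: "\<forall>w\<in>W. \<forall>t. \<bar>t\<bar> < 3/4*\<bar>fst w\<bar> \<longrightarrow>
      norm (f w t) * (\<bar>fst w\<bar> ^ k * (1+\<bar>t\<bar>)^m) \<le> C"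
    and D: "\<forall>w\<in>W. \<forall>t. \<bar>t\<bar> < 3/4*\<bar>fst w\<bar> \<longrightarrow>
      norm (g w t) * (\<bar>fst w\<bar> ^ k' * (1+\<bar>t\<bar>)^m') \<le> D" unfolding bnd_def by blast
  have "norm (f w t * g w t) * (\<bar>fst w\<bar> ^ (k+k') * (1+\<bar>t\<bar>)^(m+m')) \<le> C * D" if "w\<in>W" "\<bar>t\<bar> < 3/4*\<bar>fst w\<bar>" for w t
  proof -
    have "norm (f w t * g w t) * (\<bar>fst w\<bar> ^ (k+k') * (1+\<bar>t\<bar>)^(m+m')) =
      (norm (f w t) * (\<bar>fst w\<bar> ^ k * (1+\<bar>t\<bar>)^m)) * (norm (g w t) * (\<bar>fst w\<bar> ^ k' * (1+\<bar>t\<bar>)^m'))"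
      by (simp add: norm_mult power_add algebra_simps)
    also have "\<dots> \<le> C * D" 
    proof (rule mult_mono)
      have "0 \<le> norm (f w t) * (\<bar>fst w\<bar> ^ k * (1+\<bar>t\<bar>)^m)" by simp
      then show "0 \<le> C" using C that by (meson order_trans)
    qed (use C D that in auto)
    finally show ?thesis .
  qed
  then show ?thesis unfolding bnd_def by blast
qed

lemma bnd_cmult: "bnd W k m f \<Longrightarrow> bnd W k m (\<lambda>w t. c * f w t)"
proof -
  assume "bnd W k m f"
  then obtain C where C: "\<forall>w\<in>W. \<forall>t. \<bar>t\<bar> < 3/4*\<bar>fst w\<bar> \<longrightarrow>
      norm (f w t) * (\<bar>fst w\<bar> ^ k * (1+\<bar>t\<bar>)^m) \<le> C" unfolding bnd_def by blast
  have "norm (c * f w t) * (\<bar>fst w\<bar> ^ k * (1+\<bar>t\<bar>)^m) \<le> norm c * C" if "w\<in>W" "\<bar>t\<bar> < 3/4*\<bar>fst w\<bar>" for w t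
    using C that by (simp add: norm_mult mult.assoc mult_left_mono)
  then show ?thesis unfolding bnd_def by blast
qed

lemma bnd_one: "bnd W 0 0 (\<lambda>w t. 1)"
  unfolding bnd_def by auto

lemma sm_add: "sm W j k m f \<Longrightarrow> sm W j k m g \<Longrightarrow> sm W j k m (\<lambda>w t. f w t + g w t)"
proof (induction j arbitrary: f g)
  case 0 then show ?case by (simp add: bnd_add)
next
  case (Suc j)
  from Suc.prems obtain f' g' where
    f': "\<forall>w\<in>W. \<forall>t. \<bar>t\<bar> < 3/4*\<bar>fst w\<bar> \<longrightarrow> (f w has_vector_derivative f' w t) (at t)" "sm W j k m f'"
    and g': "\<forall>w\<in>W. \<forall>t. \<bar>t\<bar> < 3/4*\<bar>fst w\<bar> \<longrightarrow> (g w has_vector_derivative g' w t) (at t)" "sm W j k m g'"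
    by auto
  show ?case
    using Suc.prems Suc.IH[OF f'(2) g'(2)] f'(1) g'(1)
    by (auto intro!: bnd_add exI[of _ "\<lambda>w t. f' w t + g' w t"] derivative_intros)
qed

lemma sm_cmult: "sm W j k m f \<Longrightarrow> sm W j k m (\<lambda>w t. c * f w t)"
proof (induction j arbitrary: f)
  case 0 then show ?case by (simp add: bnd_cmult)
next
  case (Suc j)
  from Suc.prems obtain f' where
    f': "\<forall>w\<in>W. \<forall>t. \<bar>t\<bar> < 3/4*\<bar>fst w\<bar> \<longrightarrow> (f w has_vector_derivative f' w t) (at t)" "sm W j k m f'"
    by auto
  show ?case
    using Suc.prems Suc.IH[OF f'(2)] f'(1)
    by (auto intro!: bnd_cmult exI[of _ "\<lambda>w t. c * f' w t"] derivative_intros)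
qed

lemma sm_one: "sm W j 0 0 (\<lambda>w t. 1)"
proof (induction j)
  case 0 then show ?case by (simp add: bnd_one)
next
  case (Suc j)
  have "sm W j 0 0 (\<lambda>w t. 0 * 1)" using sm_cmult[OF Suc] .
  then show ?case by (auto intro!: bnd_one exI[of _ "\<lambda>w t. 0"])
qed

lemma sm_mult: "sm W j k m f \<Longrightarrow> sm W j k' m' g \<Longrightarrow> sm W j (k+k') (m+m') (\<lambda>w t. f w t * g w t)"
proof (induction j arbitrary: f g)
  case 0 then show ?case by (simp add: bnd_mult)
next
  case (Suc j)
  from Suc.prems obtain f' g' where
    f': "\<forall>w\<in>W. \<forall>t. \<bar>t\<bar> < 3/4*\<bar>fst w\<bar> \<longrightarrow> (f w has_vector_derivative f' w t) (at t)" "sm W j k m f'"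
    and g': "\<forall>w\<in>W. \<forall>t. \<bar>t\<bar> < 3/4*\<bar>fst w\<bar> \<longrightarrow> (g w has_vector_derivative g' w t) (at t)" "sm W j k' m' g'"
    by auto
  have f: "sm W j k m f" and g: "sm W j k' m' g" using Suc.prems sm_down by blast+
  have "sm W j (k+k') (m+m') (\<lambda>w t. f w t * g' w t + f' w t * g w t)"
    by (rule sm_add[OF Suc.IH[OF f g'(2)] Suc.IH[OF f'(2) g]])
  then show ?case
    using Suc.prems f'(1) g'(1) sm_bnd
    by (auto intro!: bnd_mult exI[of _ "\<lambda>w t. f w t * g' w t + f' w t * g w t"] derivative_intros)
qed



lemma int_in_ball: "1 \<le> (r::real) \<Longrightarrow> t \<in> {-r/2..r/2} \<Longrightarrow> \<bar>t\<bar> < 3/4*r"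
  by auto

lemma ibp_base:
  assumes W1: "\<forall>w\<in>W. 1 \<le> \<bar>fst w\<bar>"
    and E1: "\<forall>w\<in>W. \<forall>t. \<bar>t\<bar> < 3/4*\<bar>fst w\<bar> \<longrightarrow> norm (E w t) \<le> 1"
    and f: "bnd W k 0 f"
  shows "\<exists>C. \<forall>w\<in>W. norm (integral {-\<bar>fst w\<bar>/2..\<bar>fst w\<bar>/2} (\<lambda>t. E w t * f w t)) * \<bar>fst w\<bar>^k \<le> C * \<bar>fst w\<bar>"
proof -
  from f obtain C where C: "\<forall>w\<in>W. \<forall>t. \<bar>t\<bar> < 3/4*\<bar>fst w\<bar> \<longrightarrow> norm (f w t) * \<bar>fst w\<bar> ^ k \<le> C"
    unfolding bnd_def by auto
  define C' where "C' = max C 0"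
  have "norm (integral {-\<bar>fst w\<bar>/2..\<bar>fst w\<bar>/2} (\<lambda>t. E w t * f w t)) * \<bar>fst w\<bar>^k \<le> C' * \<bar>fst w\<bar>" if w: "w \<in> W" for w
  proof -
    define r where "r = \<bar>fst w\<bar>"
    have r1: "1 \<le> r" using W1 w r_def by auto
    have rk: "0 < r^k" using r1 by simp
    have bd: "norm (E w t * f w t) \<le> C' / r^k" if "t \<in> {-r/2..r/2}" for t
    proof -
      have tt: "\<bar>t\<bar> < 3/4*\<bar>fst w\<bar>" using int_in_ball[OF r1 that] r_def by simp
      have "norm (E w t * f w t) \<le> norm (f w t)" using E1 w tt
        by (simp add: norm_mult mult_left_le_one_le)
      also have "\<dots> \<le> C' / r^k" using C w tt rk unfolding C'_def r_def
        by (simp add: pos_le_divide_eq le_max_iff_disj)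
      finally show ?thesis .
    qed
    have "norm (integral {-r/2..r/2} (\<lambda>t. E w t * f w t)) \<le> C' / r^k * r"
    proof (cases "(\<lambda>t. E w t * f w t) integrable_on {-r/2..r/2}")
      case True
      have "norm (integral {-r/2..r/2} (\<lambda>t. E w t * f w t)) \<le> C' / r^k * measure lborel (cbox (-r/2) (r/2))"
        apply (rule has_integral_bound[of _ _ "integral {-r/2..r/2} (\<lambda>t. E w t * f w t)"])
        using True bd rk by (auto simp: C'_def)
      then show ?thesis using r1 by simp
    next
      case False
      then show ?thesis using rk r1 by (simp add: not_integrable_integral C'_def)
    qed
    then show ?thesis using rk unfolding r_def[symmetric]
      by (simp add: field_simps)
  qed
  then show ?thesis by blast
qed

lemma bnd_point:
  assumes "bnd W k m g" "w \<in> W" "\<bar>t\<bar> < 3/4*\<bar>fst w\<bar>"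
  obtains C where "\<And>w t. w \<in> W \<Longrightarrow> \<bar>t\<bar> < 3/4*\<bar>fst w\<bar> \<Longrightarrow> norm (g w t) * (\<bar>fst w\<bar> ^ k * (1+\<bar>t\<bar>)^m) \<le> C"
  using assms unfolding bnd_def by blast

lemma endpoint_bound:
  fixes r c C2 :: real
  assumes r1: "1 \<le> r" and at: "\<bar>t\<bar> = r/2"
    and h: "c * (r ^ (1+k) * (1+\<bar>t\<bar>)^(Suc N)) \<le> C2" and c: "0 \<le> c"
  shows "c * r^(k + Suc N) \<le> 2^N * max C2 0 * r"
proof -
  have "r^N = 2^N * (r/2)^N" by (simp add: power_divide)
  also have "\<dots> \<le> 2^N * (1+\<bar>t\<bar>)^N" using at r1 by (intro mult_left_mono power_mono) auto
  also have "\<dots> \<le> 2^N * (1+\<bar>t\<bar>)^(Suc N)" by (intro mult_left_mono power_increasing) auto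
  finally have rN: "r^N \<le> 2^N * (1+\<bar>t\<bar>)^(Suc N)" .
  have "c * r^(k + Suc N) = (c * r^(1+k)) * r^N" by (simp add: power_add algebra_simps)
  also have "\<dots> \<le> (c * r^(1+k)) * (2^N * (1+\<bar>t\<bar>)^(Suc N))"
    using rN c r1 by (intro mult_left_mono) auto
  also have "\<dots> = 2^N * (c * (r ^ (1+k) * (1+\<bar>t\<bar>)^(Suc N)))" by (simp add: algebra_simps)
  also have "\<dots> \<le> 2^N * max C2 0" using h by (intro mult_left_mono) auto
  also have "\<dots> \<le> 2^N * max C2 0 * r"
  proof -
    have "0 \<le> (2::real)^N * max C2 0" by simp
    from mult_left_mono[OF r1 this] show ?thesis by simp
  qed
  finally show ?thesis .
qed

lemma ibp:
  assumes W1: "\<forall>w\<in>W. 1 \<le> \<bar>fst w\<bar>"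
    and dE: "\<forall>w\<in>W. \<forall>t. \<bar>t\<bar> < 3/4*\<bar>fst w\<bar> \<longrightarrow> (E w has_vector_derivative \<i> * dp w t * E w t) (at t)"
    and E1: "\<forall>w\<in>W. \<forall>t. \<bar>t\<bar> < 3/4*\<bar>fst w\<bar> \<longrightarrow> norm (E w t) \<le> 1"
    and qd: "\<forall>w\<in>W. \<forall>t. \<bar>t\<bar> < 3/4*\<bar>fst w\<bar> \<longrightarrow> q w t * dp w t = 1"
    and qs: "\<forall>j. sm W j 1 0 q"
  shows "sm W N k N f \<Longrightarrow> \<exists>C. \<forall>w\<in>W. norm (integral {-\<bar>fst w\<bar>/2..\<bar>fst w\<bar>/2} (\<lambda>t. E w t * f w t)) * \<bar>fst w\<bar>^(k+N) \<le> C * \<bar>fst w\<bar>"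
proof (induction N arbitrary: k f)
  case 0
  then show ?case using ibp_base[OF W1 E1, of k f] sm_bnd by fastforce
next
  case (Suc N)
  from Suc.prems obtain f' where
    f': "\<forall>w\<in>W. \<forall>t. \<bar>t\<bar> < 3/4*\<bar>fst w\<bar> \<longrightarrow> (f w has_vector_derivative f' w t) (at t)"
    by auto
  define g where "g = (\<lambda>w t. q w t * f w t)"
  have gs: "sm W (Suc N) (1+k) (Suc N) g"
    unfolding g_def using sm_mult[OF qs[rule_format, of "Suc N"] Suc.prems] by simp
  then obtain g' where
    g': "\<forall>w\<in>W. \<forall>t. \<bar>t\<bar> < 3/4*\<bar>fst w\<bar> \<longrightarrow> (g w has_vector_derivative g' w t) (at t)"
    and g's: "sm W N (1+k) (Suc N) g'" by auto
  have g's': "sm W N (1+k) N g'" using sm_weaken[OF g's _ _ W1] by auto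
  obtain C1 where C1: "\<forall>w\<in>W. norm (integral {-\<bar>fst w\<bar>/2..\<bar>fst w\<bar>/2} (\<lambda>t. E w t * g' w t)) * \<bar>fst w\<bar>^(1+k+N) \<le> C1 * \<bar>fst w\<bar>"
    using Suc.IH[OF g's'] by blast
  obtain C2 where C2: "\<And>w t. w \<in> W \<Longrightarrow> \<bar>t\<bar> < 3/4*\<bar>fst w\<bar> \<Longrightarrow> norm (g w t) * (\<bar>fst w\<bar> ^ (1+k) * (1+\<bar>t\<bar>)^(Suc N)) \<le> C2"
    using sm_bnd[OF gs] unfolding bnd_def by blast
  have "norm (integral {-\<bar>fst w\<bar>/2..\<bar>fst w\<bar>/2} (\<lambda>t. E w t * f w t)) * \<bar>fst w\<bar>^(k+Suc N) \<le> (2 * 2^N * max C2 0 + C1) * \<bar>fst w\<bar>"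
    if w: "w \<in> W" for w
  proof -
    define r where "r = \<bar>fst w\<bar>"
    have r1: "1 \<le> r" using W1 w r_def by auto
    define a b where "a = -r/2" and "b = r/2"
    have ab: "a \<le> b" using r1 a_def b_def by simp
    have inI: "\<bar>t\<bar> < 3/4*\<bar>fst w\<bar>" if "t \<in> {a..b}" for t
      using int_in_ball[OF r1] that a_def b_def r_def by auto
    have der: "((\<lambda>t. E w t * g w t) has_vector_derivative (\<i> * E w t * f w t + E w t * g' w t)) (at t within {a..b})"
      if "t \<in> {a..b}" for t
    proof -
      have "((\<lambda>t. E w t * g w t) has_vector_derivative (E w t * g' w t + (\<i> * dp w t * E w t) * g w t)) (at t)"
        using dE g' w inI[OF that] by (intro has_vector_derivative_mult) auto
      moreover have "E w t * g' w t + (\<i> * dp w t * E w t) * g w t = \<i> * E w t * f w t + E w t * g' w t"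
      proof -
        have "(\<i> * dp w t * E w t) * g w t = \<i> * E w t * f w t * (q w t * dp w t)"
          unfolding g_def by (simp add: algebra_simps)
        also have "\<dots> = \<i> * E w t * f w t" using qd w inI[OF that] by simp
        finally show ?thesis by simp
      qed
      ultimately show ?thesis
        by (metis has_vector_derivative_at_within)
    qed
    have FT: "((\<lambda>t. \<i> * E w t * f w t + E w t * g' w t) has_integral (E w b * g w b - E w a * g w a)) {a..b}"
      by (rule fundamental_theorem_of_calculus[OF ab der])
    have cont: "continuous_on {a..b} (\<lambda>t. E w t * f w t)"
    proof (rule continuous_at_imp_continuous_on, rule ballI)
      fix t assume "t \<in> {a..b}"
      then have "((\<lambda>t. E w t * f w t) has_vector_derivative (E w t * f' w t + (\<i> * dp w t * E w t) * f w t)) (at t)"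
        using dE f' w inI by (intro has_vector_derivative_mult) auto
      then show "isCont (\<lambda>t. E w t * f w t) t" by (rule has_vector_derivative_continuous)
    qed
    have iEf: "(\<lambda>t. \<i> * E w t * f w t) integrable_on {a..b}"
    proof -
      have "continuous_on {a..b} (\<lambda>t. \<i> * (E w t * f w t))"
        by (intro continuous_on_mult continuous_on_const cont)
      from integrable_continuous_interval[OF this] show ?thesis by (simp add: mult.assoc)
    qed
    have iEg: "(\<lambda>t. E w t * g' w t) integrable_on {a..b}"
    proof -
      have "(\<lambda>t. (\<i> * E w t * f w t + E w t * g' w t) - \<i> * E w t * f w t) integrable_on {a..b}"
        using FT iEf by (intro integrable_diff) auto
      then show ?thesis by simp
    qed
    have "\<i> * integral {a..b} (\<lambda>t. E w t * f w t) + integral {a..b} (\<lambda>t. E w t * g' w t)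
          = E w b * g w b - E w a * g w a"
    proof -
      have "integral {a..b} (\<lambda>t. \<i> * E w t * f w t + E w t * g' w t) = E w b * g w b - E w a * g w a"
        using FT by (rule integral_unique)
      moreover have "integral {a..b} (\<lambda>t. \<i> * E w t * f w t + E w t * g' w t) =
          integral {a..b} (\<lambda>t. \<i> * E w t * f w t) + integral {a..b} (\<lambda>t. E w t * g' w t)"
        using iEf iEg by (rule integral_add)
      moreover have "integral {a..b} (\<lambda>t. \<i> * E w t * f w t) = \<i> * integral {a..b} (\<lambda>t. E w t * f w t)"
        by (simp add: mult.assoc)
      ultimately show ?thesis by simp
    qed
    then have "\<i> * integral {a..b} (\<lambda>t. E w t * f w t) = (E w b * g w b - E w a * g w a - integral {a..b} (\<lambda>t. E w t * g' w t))"
      by (simp add: algebra_simps)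
    then have "- \<i> * (\<i> * integral {a..b} (\<lambda>t. E w t * f w t)) = - \<i> * (E w b * g w b - E w a * g w a - integral {a..b} (\<lambda>t. E w t * g' w t))"
      by simp
    then have "integral {a..b} (\<lambda>t. E w t * f w t) = - \<i> * (E w b * g w b - E w a * g w a - integral {a..b} (\<lambda>t. E w t * g' w t))"
      by (simp add: mult.assoc[symmetric])
    then have nI: "norm (integral {a..b} (\<lambda>t. E w t * f w t)) \<le> norm (g w b) + norm (g w a) + norm (integral {a..b} (\<lambda>t. E w t * g' w t))"
    proof -
      assume eq: "integral {a..b} (\<lambda>t. E w t * f w t) = - \<i> * (E w b * g w b - E w a * g w a - integral {a..b} (\<lambda>t. E w t * g' w t))"
      have "norm (E w b * g w b) \<le> norm (g w b)" using E1 w inI[of b] ab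
        by (auto simp: norm_mult mult_left_le_one_le)
      moreover have "norm (E w a * g w a) \<le> norm (g w a)" using E1 w inI[of a] ab
        by (auto simp: norm_mult mult_left_le_one_le)
      ultimately show ?thesis
      proof -
        assume h1: "norm (E w b * g w b) \<le> norm (g w b)" and h2: "norm (E w a * g w a) \<le> norm (g w a)"
        have "norm (integral {a..b} (\<lambda>t. E w t * f w t)) = norm (E w b * g w b - E w a * g w a - integral {a..b} (\<lambda>t. E w t * g' w t))"
          unfolding eq by (simp add: norm_mult)
        also have "\<dots> \<le> norm (E w b * g w b - E w a * g w a) + norm (integral {a..b} (\<lambda>t. E w t * g' w t))"
          by (rule norm_triangle_ineq4)
        also have "\<dots> \<le> (norm (E w b * g w b) + norm (E w a * g w a)) + norm (integral {a..b} (\<lambda>t. E w t * g' w t))"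
          by (intro add_right_mono norm_triangle_ineq4)
        finally show ?thesis using h1 h2 by linarith
      qed
    qed
    have bb: "norm (g w b) * r^(k + Suc N) \<le> 2^N * max C2 0 * r"
    proof -
      have hb: "\<bar>b\<bar> = r/2" using r1 a_def b_def by auto
      have "b \<in> {a..b}" using ab by simp
      from C2[OF w inI[OF this]] have "norm (g w b) * (r^(1+k)*(1+\<bar>b\<bar>)^Suc N) \<le> C2" unfolding r_def .
      then show ?thesis by (rule endpoint_bound[OF r1 hb _ norm_ge_zero])
    qed
    have ba: "norm (g w a) * r^(k + Suc N) \<le> 2^N * max C2 0 * r"
    proof -
      have hb: "\<bar>a\<bar> = r/2" using r1 a_def b_def by auto
      have "a \<in> {a..b}" using ab by simp
      from C2[OF w inI[OF this]] have "norm (g w a) * (r^(1+k)*(1+\<bar>a\<bar>)^Suc N) \<le> C2" unfolding r_def .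
      then show ?thesis by (rule endpoint_bound[OF r1 hb _ norm_ge_zero])
    qed
    have bI: "norm (integral {a..b} (\<lambda>t. E w t * g' w t)) * r^(k + Suc N) \<le> C1 * r"
      using C1 w unfolding a_def b_def r_def by simp
    have "norm (integral {a..b} (\<lambda>t. E w t * f w t)) * r^(k + Suc N) \<le>
       (norm (g w b) + norm (g w a) + norm (integral {a..b} (\<lambda>t. E w t * g' w t))) * r^(k + Suc N)"
      using nI r1 by (intro mult_right_mono) auto
    also have "\<dots> \<le> (2 * 2^N * max C2 0 + C1) * r" using bb ba bI by (simp add: algebra_simps)
    finally show ?thesis unfolding a_def b_def r_def .
  qed
  then show ?case by blast
qed



locale chs =
  fixes p s A R :: real and \<gamma> :: complex
  assumes p2: "p > 2" and s: "s = 1 \<or> s = -1" and g1: "norm \<gamma> = 1" and gIm: "Im \<gamma> \<ge> 0"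
    and A0: "A \<ge> 0" and R4: "R \<ge> 4" and HR: "A + 1 \<le> p * (R/4) powr (p-2) / 4"
begin

definition "W = {w. s * fst w \<ge> R \<and> \<bar>snd w\<bar> \<le> A*\<bar>fst w\<bar>}"
definition "yy w t = s * (t + fst w)"
definition "E w t = exp (\<i> * (\<gamma> * of_real (yy w t powr p) - of_real ((t + fst w) * snd w)))"
definition "P w t = \<gamma> * of_real (s * p * yy w t powr (p-1))"
definition "dp w t = P w t - of_real (snd w)"
definition "q w t = 1 / dp w t"
definition "u w t = 1 / complex_of_real (t + fst w)"
definition "v w t = of_real (snd w) * q w t"

lemma ss: "s * s = 1" using s by auto
lemma sabs: "\<bar>s\<bar> = 1" using s by auto

lemma W_facts:
  assumes "w \<in> W"
  shows "s * fst w = \<bar>fst w\<bar>" "\<bar>fst w\<bar> \<ge> 4" "\<bar>snd w\<bar> \<le> A*\<bar>fst w\<bar>" "\<bar>fst w\<bar> \<ge> 1"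
proof -
  have a: "s * fst w \<ge> R" "\<bar>snd w\<bar> \<le> A*\<bar>fst w\<bar>" using assms W_def by auto
  show "s * fst w = \<bar>fst w\<bar>" using a(1) R4 s by auto
  then show "\<bar>fst w\<bar> \<ge> 4" using a(1) R4 by auto
  then show "\<bar>fst w\<bar> \<ge> 1" by auto
  show "\<bar>snd w\<bar> \<le> A*\<bar>fst w\<bar>" by fact
qed

lemma W1: "\<forall>w\<in>W. 1 \<le> \<bar>fst w\<bar>" using W_facts by auto

lemma yy_ge:
  assumes "w \<in> W" "\<bar>t\<bar> < 3/4*\<bar>fst w\<bar>"
  shows "yy w t \<ge> \<bar>fst w\<bar>/4" "yy w t > 0" "t + fst w \<noteq> 0"
proof -
  have "s * t \<ge> - \<bar>t\<bar>" using s by auto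
  then show 1: "yy w t \<ge> \<bar>fst w\<bar>/4" unfolding yy_def using W_facts[OF assms(1)] assms(2)
    by (simp add: algebra_simps)
  then show 2: "yy w t > 0" using W_facts[OF assms(1)] by linarith
  then show "t + fst w \<noteq> 0" unfolding yy_def by auto
qed

lemma P_norm:
  assumes "w \<in> W" "\<bar>t\<bar> < 3/4*\<bar>fst w\<bar>"
  shows "norm (P w t) = p * yy w t powr (p-1)"
  unfolding P_def using g1 sabs p2 by (simp add: norm_mult abs_mult)

lemma P_big:
  assumes "w \<in> W" "\<bar>t\<bar> < 3/4*\<bar>fst w\<bar>"
  shows "norm (P w t) \<ge> (A+1) * \<bar>fst w\<bar>"
proof -
  define r where "r = \<bar>fst w\<bar>"
  have r4: "r \<ge> 4" using W_facts[OF assms(1)] r_def by auto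
  have R4r: "R/4 \<le> r/4" using assms(1) W_def r_def W_facts[OF assms(1)] by auto
  have y: "yy w t \<ge> r/4" using yy_ge[OF assms] r_def by auto
  have "(R/4) powr (p-2) * (r/4) \<le> (r/4) powr (p-2) * (r/4)"
    using R4r R4 p2 r4 by (intro mult_right_mono powr_mono2) auto
  also have "\<dots> = (r/4) powr (p-2) * (r/4) powr 1" using r4 by simp
  also have "\<dots> = (r/4) powr ((p-2) + 1)" by (rule powr_add[symmetric])
  also have "\<dots> = (r/4) powr (p-1)" by simp
  also have "\<dots> \<le> yy w t powr (p-1)" using y p2 r4 by (intro powr_mono2) auto
  finally have "p * ((R/4) powr (p-2) * (r/4)) \<le> p * yy w t powr (p-1)"
    using p2 by (intro mult_left_mono) auto
  then have "p * yy w t powr (p-1) \<ge> p * (R/4) powr (p-2) / 4 * r" by simp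
  moreover have "p * (R/4) powr (p-2) / 4 * r \<ge> (A+1) * r"
    using HR r4 by (intro mult_right_mono) auto
  ultimately show ?thesis using P_norm[OF assms] r_def by simp
qed

lemma dp_big:
  assumes "w \<in> W" "\<bar>t\<bar> < 3/4*\<bar>fst w\<bar>"
  shows "norm (dp w t) \<ge> \<bar>fst w\<bar>"
proof -
  have "norm (dp w t) \<ge> norm (P w t) - norm (complex_of_real (snd w))"
    unfolding dp_def by (rule norm_triangle_ineq2)
  moreover have "norm (complex_of_real (snd w)) = \<bar>snd w\<bar>" by simp
  moreover have "(A+1) * \<bar>fst w\<bar> = A * \<bar>fst w\<bar> + \<bar>fst w\<bar>" by (simp add: algebra_simps)
  ultimately show ?thesis using P_big[OF assms] W_facts(3)[OF assms(1)] by linarith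
qed

lemma dp_nz: "w \<in> W \<Longrightarrow> \<bar>t\<bar> < 3/4*\<bar>fst w\<bar> \<Longrightarrow> dp w t \<noteq> 0"
proof -
  assume a: "w \<in> W" "\<bar>t\<bar> < 3/4*\<bar>fst w\<bar>"
  have "norm (dp w t) \<ge> 1" using dp_big[OF a] W_facts(4)[OF a(1)] by linarith
  then show ?thesis by auto
qed

lemma q_bnd: "w \<in> W \<Longrightarrow> \<bar>t\<bar> < 3/4*\<bar>fst w\<bar> \<Longrightarrow> norm (q w t) * \<bar>fst w\<bar> \<le> 1"
  using dp_big[of w t] W_facts[of w] unfolding q_def
  by (simp add: norm_divide divide_le_eq)

lemma v_bnd: "w \<in> W \<Longrightarrow> \<bar>t\<bar> < 3/4*\<bar>fst w\<bar> \<Longrightarrow> norm (v w t) \<le> A"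
proof -
  assume a: "w \<in> W" "\<bar>t\<bar> < 3/4*\<bar>fst w\<bar>"
  have "norm (v w t) = \<bar>snd w\<bar> * norm (q w t)" unfolding v_def by (simp add: norm_mult)
  also have "\<dots> \<le> A * \<bar>fst w\<bar> * norm (q w t)" using W_facts[OF a(1)] by (intro mult_right_mono) auto
  also have "\<dots> = A * (norm (q w t) * \<bar>fst w\<bar>)" by simp
  also have "\<dots> \<le> A * 1" using q_bnd[OF a] A0 by (intro mult_left_mono) auto
  finally show ?thesis by simp
qed

lemma u_bnd: "w \<in> W \<Longrightarrow> \<bar>t\<bar> < 3/4*\<bar>fst w\<bar> \<Longrightarrow> norm (u w t) * \<bar>fst w\<bar> \<le> 4"
proof -
  assume a: "w \<in> W" "\<bar>t\<bar> < 3/4*\<bar>fst w\<bar>"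
  have "\<bar>yy w t\<bar> = \<bar>t + fst w\<bar>" unfolding yy_def using sabs by (simp add: abs_mult)
  then have "\<bar>t + fst w\<bar> = yy w t" using yy_ge[OF a] by simp
  then have "\<bar>t + fst w\<bar> \<ge> \<bar>fst w\<bar>/4" using yy_ge[OF a] by simp
  moreover have "norm (u w t) = 1 / \<bar>t + fst w\<bar>" unfolding u_def
    by (simp only: norm_divide norm_one norm_of_real)
  ultimately show ?thesis using yy_ge[OF a] by (simp add: divide_le_eq)
qed

lemma E_bnd: "w \<in> W \<Longrightarrow> \<bar>t\<bar> < 3/4*\<bar>fst w\<bar> \<Longrightarrow> norm (E w t) \<le> 1"
proof -
  assume a: "w \<in> W" "\<bar>t\<bar> < 3/4*\<bar>fst w\<bar>"
  have "Im (\<gamma> * of_real (yy w t powr p)) \<ge> 0" using gIm by simp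
  then show ?thesis unfolding E_def by simp
qed


lemma D_yyp:
  assumes "w \<in> W" "\<bar>t\<bar> < 3/4*\<bar>fst w\<bar>"
  shows "((\<lambda>t. yy w t powr e) has_real_derivative e * yy w t powr (e-1) * s) (at t)"
proof -
  have g: "((\<lambda>t. s * (t + fst w)) has_real_derivative s) (at t)"
    by (auto intro!: derivative_eq_intros)
  from DERIV_fun_powr[OF g, of e] yy_ge[OF assms] show ?thesis unfolding yy_def by simp
qed

lemma D_E:
  assumes "w \<in> W" "\<bar>t\<bar> < 3/4*\<bar>fst w\<bar>"
  shows "(E w has_vector_derivative \<i> * dp w t * E w t) (at t)"
proof -
  define phi where "phi = (\<lambda>t. \<i> * (\<gamma> * of_real (yy w t powr p) - of_real ((t + fst w) * snd w)))"
  have d1: "((\<lambda>t. complex_of_real (yy w t powr p)) has_vector_derivative of_real (p * yy w t powr (p-1) * s)) (at t)"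
    by (rule has_vector_derivative_of_real[OF D_yyp[OF assms]])
  have d2: "((\<lambda>t. complex_of_real ((t + fst w) * snd w)) has_vector_derivative of_real (snd w)) (at t)"
    by (rule has_vector_derivative_of_real) (auto intro!: derivative_eq_intros)
  have dphi: "(phi has_vector_derivative \<i> * (\<gamma> * of_real (p * yy w t powr (p-1) * s) - of_real (snd w))) (at t)"
    unfolding phi_def
    by (intro has_vector_derivative_mult_right has_vector_derivative_diff d1 d2)
  have "((exp \<circ> phi) has_vector_derivative (\<i> * (\<gamma> * of_real (p * yy w t powr (p-1) * s) - of_real (snd w))) * exp (phi t)) (at t)"
    by (rule field_vector_diff_chain_at[OF dphi DERIV_exp])
  moreover have "exp \<circ> phi = E w" unfolding phi_def E_def by (auto simp: fun_eq_iff)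
  moreover have "\<gamma> * of_real (p * yy w t powr (p-1) * s) - of_real (snd w) = dp w t"
    unfolding dp_def P_def by (simp add: algebra_simps)
  moreover have "exp (phi t) = E w t" unfolding phi_def E_def by simp
  ultimately show ?thesis by simp
qed

lemma P_id:
  assumes "w \<in> W" "\<bar>t\<bar> < 3/4*\<bar>fst w\<bar>"
  shows "\<gamma> * of_real (s * p * ((p-1) * yy w t powr (p-1-1) * s)) = (complex_of_real p - 1) * u w t * P w t"
proof -
  define y where "y = yy w t"
  have y0: "y > 0" using yy_ge[OF assms] y_def by simp
  have tx: "t + fst w \<noteq> 0" using yy_ge[OF assms] by simp
  have yp: "y powr (p-1) = y powr (p-1-1) * y"
  proof -
    have "y powr (p-1-1) * y = y powr (p-1-1) * y powr 1" using y0 by simp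
    also have "\<dots> = y powr ((p-1-1) + 1)" by (rule powr_add[symmetric])
    finally show ?thesis by simp
  qed
  have real: "s * p * ((p-1) * y powr (p-1-1) * s) * (t + fst w) = (p-1) * (s * p * y powr (p-1))"
    unfolding yp using ss unfolding y_def yy_def by (simp add: algebra_simps)
  have "(complex_of_real p - 1) * u w t * P w t = \<gamma> * of_real ((p-1) * (s * p * y powr (p-1)) / (t + fst w))"
    unfolding u_def P_def y_def by (simp add: field_simps)
  also have "\<dots> = \<gamma> * of_real (s * p * ((p-1) * y powr (p-1-1) * s))"
    unfolding real[symmetric] using tx by simp
  finally show ?thesis unfolding y_def by (rule sym)
qed

lemma D_P:
  assumes "w \<in> W" "\<bar>t\<bar> < 3/4*\<bar>fst w\<bar>"
  shows "(P w has_vector_derivative (complex_of_real p - 1) * u w t * P w t) (at t)"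
proof -
  have "((\<lambda>t. \<gamma> * of_real (s * p * yy w t powr (p-1))) has_vector_derivative
      \<gamma> * of_real (s * p * ((p-1) * yy w t powr (p-1-1) * s))) (at t)"
    by (intro has_vector_derivative_mult_right has_vector_derivative_of_real DERIV_cmult D_yyp[OF assms])
  then show ?thesis unfolding P_id[OF assms] P_def[abs_def] .
qed

lemma D_q:
  assumes "w \<in> W" "\<bar>t\<bar> < 3/4*\<bar>fst w\<bar>"
  shows "(q w has_vector_derivative - (complex_of_real p - 1) * u w t * (1 + v w t) * q w t) (at t)"
proof -
  have ddp: "(dp w has_vector_derivative (complex_of_real p - 1) * u w t * P w t) (at t)"
  proof -
    have "((\<lambda>t. P w t - of_real (snd w)) has_vector_derivative (complex_of_real p - 1) * u w t * P w t - 0) (at t)"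
      by (intro has_vector_derivative_diff D_P[OF assms] has_vector_derivative_const)
    then show ?thesis unfolding dp_def[abs_def] by simp
  qed
  have nz: "dp w t \<noteq> 0" using dp_nz[OF assms] .
  have "((inverse \<circ> dp w) has_vector_derivative ((complex_of_real p - 1) * u w t * P w t) * (- (inverse (dp w t) ^ Suc (Suc 0)))) (at t)"
    by (rule field_vector_diff_chain_at[OF ddp DERIV_inverse[OF nz]])
  moreover have "inverse \<circ> dp w = q w" unfolding q_def by (auto simp: fun_eq_iff divide_inverse)
  moreover have "((complex_of_real p - 1) * u w t * P w t) * (- (inverse (dp w t) ^ Suc (Suc 0))) = - (complex_of_real p - 1) * u w t * (1 + v w t) * q w t"
  proof -
    have Pq: "P w t * q w t = 1 + v w t"
      unfolding v_def q_def using nz unfolding dp_def by (simp add: field_simps)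
    have "((complex_of_real p - 1) * u w t * P w t) * (- (inverse (dp w t) ^ Suc (Suc 0))) = - (complex_of_real p - 1) * u w t * (P w t * q w t) * q w t"
      unfolding q_def by (simp add: power2_eq_square divide_inverse algebra_simps)
    then show ?thesis unfolding Pq .
  qed
  ultimately show ?thesis by simp
qed

lemma D_v:
  assumes "w \<in> W" "\<bar>t\<bar> < 3/4*\<bar>fst w\<bar>"
  shows "(v w has_vector_derivative - (complex_of_real p - 1) * u w t * (1 + v w t) * v w t) (at t)"
proof -
  have fv: "v w = (\<lambda>t. of_real (snd w) * q w t)" by (auto simp: v_def fun_eq_iff)
  have "((\<lambda>t. of_real (snd w) * q w t) has_vector_derivative of_real (snd w) * (- (complex_of_real p - 1) * u w t * (1 + v w t) * q w t)) (at t)"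
    by (intro has_vector_derivative_mult_right D_q[OF assms])
  then have d: "(v w has_vector_derivative of_real (snd w) * (- (complex_of_real p - 1) * u w t * (1 + v w t) * q w t)) (at t)"
    by (simp only: fv[symmetric])
  have eq: "of_real (snd w) * (- (complex_of_real p - 1) * u w t * (1 + v w t) * q w t) = - (complex_of_real p - 1) * u w t * (1 + v w t) * v w t"
    unfolding v_def by (simp add: algebra_simps)
  from d show ?thesis unfolding eq .
qed

lemma D_u:
  assumes "w \<in> W" "\<bar>t\<bar> < 3/4*\<bar>fst w\<bar>"
  shows "(u w has_vector_derivative - (u w t * u w t)) (at t)"
proof -
  have nz: "complex_of_real (t + fst w) \<noteq> 0" by (simp only: of_real_eq_0_iff) (use yy_ge[OF assms] in simp)
  have d: "((\<lambda>t. complex_of_real (t + fst w)) has_vector_derivative 1) (at t)"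
    using has_vector_derivative_of_real[of "\<lambda>t. t + fst w" 1 "at t"]
    by (auto intro!: derivative_eq_intros)
  have "((inverse \<circ> (\<lambda>t. complex_of_real (t + fst w))) has_vector_derivative 1 * (- (inverse (complex_of_real (t + fst w)) ^ Suc (Suc 0)))) (at t)"
    by (rule field_vector_diff_chain_at[OF d DERIV_inverse[OF nz]])
  moreover have "inverse \<circ> (\<lambda>t. complex_of_real (t + fst w)) = u w" unfolding u_def by (auto simp: fun_eq_iff divide_inverse)
  ultimately show ?thesis unfolding u_def by (simp add: power2_eq_square divide_inverse)
qed


lemma hvd_eq: "(f has_vector_derivative d) F \<Longrightarrow> d = d' \<Longrightarrow> (f has_vector_derivative d') F"
  by simp

lemma u_sm: "sm W j 1 0 u"
proof (induction j)
  case 0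
  show ?case unfolding bnd_def sm.simps by (intro exI[of _ 4]) (use u_bnd in auto)
next
  case (Suc j)
  have b: "bnd W 1 0 u" unfolding bnd_def by (intro exI[of _ 4]) (use u_bnd in auto)
  have "sm W j (1+1) (0+0) (\<lambda>w t. u w t * u w t)" by (rule sm_mult[OF Suc Suc])
  then have "sm W j (1+1) (0+0) (\<lambda>w t. (-1) * (u w t * u w t))" by (rule sm_cmult)
  then have s1: "sm W j 1 0 (\<lambda>w t. (-1) * (u w t * u w t))" by (rule sm_weaken) (use W1 in auto)
  have d: "\<forall>w\<in>W. \<forall>t. \<bar>t\<bar> < 3/4*\<bar>fst w\<bar> \<longrightarrow> (u w has_vector_derivative (-1) * (u w t * u w t)) (at t)"
    using D_u by (auto intro: hvd_eq)
  show ?case unfolding sm.simps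
    by (intro conjI b exI[of _ "\<lambda>w t. (-1) * (u w t * u w t)"]) (use s1 d in blast)+
qed

lemma qv_sm: "sm W j 1 0 q \<and> sm W j 0 0 v"
proof (induction j)
  case 0
  show ?case unfolding bnd_def sm.simps by (intro conjI exI[of _ 1] exI[of _ A]) (use q_bnd v_bnd in auto)
next
  case (Suc j)
  have bq: "bnd W 1 0 q" unfolding bnd_def by (intro exI[of _ 1]) (use q_bnd in auto)
  have bv: "bnd W 0 0 v" unfolding bnd_def by (intro exI[of _ A]) (use v_bnd in auto)
  have q: "sm W j 1 0 q" and v: "sm W j 0 0 v" using Suc by auto
  have v1: "sm W j 0 0 (\<lambda>w t. 1 + v w t)" using sm_add[OF sm_one v] by simp
  have "sm W j (1 + (0 + 1)) (0 + (0 + 0)) (\<lambda>w t. u w t * ((1 + v w t) * q w t))"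
    by (intro sm_mult u_sm v1 q)
  then have "sm W j (1 + (0 + 1)) (0 + (0 + 0)) (\<lambda>w t. (- (complex_of_real p - 1)) * (u w t * ((1 + v w t) * q w t)))"
    by (rule sm_cmult)
  then have sq: "sm W j 1 0 (\<lambda>w t. (- (complex_of_real p - 1)) * (u w t * ((1 + v w t) * q w t)))"
    by (rule sm_weaken) (use W1 in auto)
  have "sm W j (1 + (0 + 0)) (0 + (0 + 0)) (\<lambda>w t. u w t * ((1 + v w t) * v w t))"
    by (intro sm_mult u_sm v1 v)
  then have "sm W j (1 + (0 + 0)) (0 + (0 + 0)) (\<lambda>w t. (- (complex_of_real p - 1)) * (u w t * ((1 + v w t) * v w t)))"
    by (rule sm_cmult)
  then have sv: "sm W j 0 0 (\<lambda>w t. (- (complex_of_real p - 1)) * (u w t * ((1 + v w t) * v w t)))"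
    by (rule sm_weaken) (use W1 in auto)
  have dq: "\<forall>w\<in>W. \<forall>t. \<bar>t\<bar> < 3/4*\<bar>fst w\<bar> \<longrightarrow> (q w has_vector_derivative (- (complex_of_real p - 1)) * (u w t * ((1 + v w t) * q w t))) (at t)"
    using D_q by (auto intro: hvd_eq simp: algebra_simps)
  have dv: "\<forall>w\<in>W. \<forall>t. \<bar>t\<bar> < 3/4*\<bar>fst w\<bar> \<longrightarrow> (v w has_vector_derivative (- (complex_of_real p - 1)) * (u w t * ((1 + v w t) * v w t))) (at t)"
    using D_v by (auto intro: hvd_eq simp: algebra_simps)
  show ?case unfolding sm.simps
    by (intro conjI bq bv exI[of _ "\<lambda>w t. (- (complex_of_real p - 1)) * (u w t * ((1 + v w t) * q w t))"]
      exI[of _ "\<lambda>w t. (- (complex_of_real p - 1)) * (u w t * ((1 + v w t) * v w t))"]) (use sq sv dq dv in blast)+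
qed

lemma h_sm:
  assumes dD: "\<forall>k x. (D k has_vector_derivative D (Suc k) x) (at x)"
    and bD: "\<forall>k m. \<exists>C. \<forall>t. norm (D k t) * (1+\<bar>t\<bar>)^m \<le> C"
  shows "sm W j 0 m (\<lambda>w t. cnj (D k t))"
proof (induction j arbitrary: k)
  case 0
  from bD obtain C where "\<forall>t. norm (D k t) * (1+\<bar>t\<bar>)^m \<le> C" by blast
  then show ?case unfolding bnd_def sm.simps by auto
next
  case (Suc j)
  from bD obtain C where "\<forall>t. norm (D k t) * (1+\<bar>t\<bar>)^m \<le> C" by blast
  then have b: "bnd W 0 m (\<lambda>w t. cnj (D k t))" unfolding bnd_def by auto
  have "\<forall>w\<in>W. \<forall>t. \<bar>t\<bar> < 3/4*\<bar>fst w\<bar> \<longrightarrow> ((\<lambda>t. cnj (D k t)) has_vector_derivative cnj (D (Suc k) t)) (at t)"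
    using dD by (auto intro: has_vector_derivative_cnj)
  then show ?case using b Suc[of "Suc k"] by (auto intro!: exI[of _ "\<lambda>w t. cnj (D (Suc k) t)"])
qed

lemma decay:
  assumes dD: "\<forall>k x. (D k has_vector_derivative D (Suc k) x) (at x)"
    and bD: "\<forall>k m. \<exists>C. \<forall>t. norm (D k t) * (1+\<bar>t\<bar>)^m \<le> C"
  shows "\<exists>C. \<forall>w\<in>W. norm (integral {-\<bar>fst w\<bar>/2..\<bar>fst w\<bar>/2} (\<lambda>t. E w t * cnj (D 0 t))) * \<bar>fst w\<bar>^N \<le> C * \<bar>fst w\<bar>"
proof -
  have "\<exists>C. \<forall>w\<in>W. norm (integral {-\<bar>fst w\<bar>/2..\<bar>fst w\<bar>/2} (\<lambda>t. E w t * cnj (D 0 t))) * \<bar>fst w\<bar>^(0+N) \<le> C * \<bar>fst w\<bar>"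
  proof (rule ibp[where dp=dp and q=q])
    show "\<forall>w\<in>W. 1 \<le> \<bar>fst w\<bar>" by (rule W1)
    show "\<forall>w\<in>W. \<forall>t. \<bar>t\<bar> < 3 / 4 * \<bar>fst w\<bar> \<longrightarrow> (E w has_vector_derivative \<i> * dp w t * E w t) (at t)"
      using D_E by auto
    show "\<forall>w\<in>W. \<forall>t. \<bar>t\<bar> < 3 / 4 * \<bar>fst w\<bar> \<longrightarrow> norm (E w t) \<le> 1" using E_bnd by auto
    show "\<forall>w\<in>W. \<forall>t. \<bar>t\<bar> < 3 / 4 * \<bar>fst w\<bar> \<longrightarrow> q w t * dp w t = 1" using dp_nz q_def by auto
    show "\<forall>j. sm W j 1 0 q" using qv_sm by auto
    show "sm W N 0 N (\<lambda>w t. cnj (D 0 t))" by (rule h_sm[OF dD bD])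
  qed
  then show ?thesis by simp
qed

end


lemma sch_bound:
  fixes D :: "nat \<Rightarrow> real \<Rightarrow> complex"
  assumes "\<forall>k m. \<exists>C. \<forall>x. \<bar>x\<bar> ^ m * norm (D k x) \<le> C"
  shows "\<forall>k m. \<exists>C. \<forall>t. norm (D k t) * (1+\<bar>t\<bar>)^m \<le> C"
proof (intro allI)
  fix k m
  obtain C0 where C0: "\<forall>x. \<bar>x\<bar> ^ 0 * norm (D k x) \<le> C0" using assms by blast
  obtain Cm where Cm: "\<forall>x. \<bar>x\<bar> ^ m * norm (D k x) \<le> Cm" using assms by blast
  have "norm (D k t) * (1+\<bar>t\<bar>)^m \<le> 2^m * (C0 + Cm)" for t
  proof -
    have "(1+\<bar>t\<bar>)^m \<le> 2^m * (1 + \<bar>t\<bar>^m)"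
    proof (cases "\<bar>t\<bar> \<le> 1")
      case True
      then have "(1+\<bar>t\<bar>)^m \<le> 2^m" by (intro power_mono) auto
      moreover have "(2::real)^m \<le> 2^m * (1 + \<bar>t\<bar>^m)"
        using mult_left_mono[of 1 "1 + \<bar>t\<bar>^m" "(2::real)^m"] by simp
      ultimately show ?thesis by linarith
    next
      case False
      then have "(1+\<bar>t\<bar>)^m \<le> (2*\<bar>t\<bar>)^m" by (intro power_mono) auto
      also have "\<dots> = 2^m * \<bar>t\<bar>^m" by (simp add: power_mult_distrib)
      moreover have "(2::real)^m * \<bar>t\<bar>^m \<le> 2^m * (1 + \<bar>t\<bar>^m)" by (intro mult_left_mono) auto
      ultimately show ?thesis by linarith
    qed
    then have "norm (D k t) * (1+\<bar>t\<bar>)^m \<le> norm (D k t) * (2^m * (1 + \<bar>t\<bar>^m))"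
      by (intro mult_left_mono) auto
    also have "\<dots> = 2^m * (norm (D k t) + \<bar>t\<bar>^m * norm (D k t))" by (simp add: algebra_simps)
    also have "\<dots> \<le> 2^m * (C0 + Cm)" using C0 Cm by (intro mult_left_mono add_mono) auto
    finally show ?thesis .
  qed
  then show "\<exists>C. \<forall>t. norm (D k t) * (1+\<bar>t\<bar>)^m \<le> C" by blast
qed

lemma inv_sq_integrable: "integrable lborel (\<lambda>t::real. inverse (1 + t^2))"
  using integrable_inverse_1_plus_square by (simp add: set_integrable_def)

lemma inv_sq_integral: "(LINT t|lborel. inverse (1 + t^2)) = pi"
  using LBINT_inverse_1_plus_square by (simp add: interval_lebesgue_integral_def set_lebesgue_integral_def)

lemma sq_le: "1 + t^2 \<le> (1 + \<bar>t::real\<bar>)^2"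
  by (simp add: power2_eq_square algebra_simps)

lemma schwartz_facts:
  assumes "schwartz phi"
  obtains D where "D 0 = phi" "\<forall>k x. (D k has_vector_derivative D (Suc k) x) (at x)"
    "\<forall>k m. \<exists>C. \<forall>t. norm (D k t) * (1+\<bar>t\<bar>)^m \<le> C"
  using assms sch_bound unfolding schwartz_def by metis

lemma phi_meas:
  assumes "\<forall>k x. (D k has_vector_derivative D (Suc k) x) (at x)"
  shows "D 0 \<in> borel_measurable borel"
proof (rule borel_measurable_continuous_onI, rule continuous_at_imp_continuous_on, rule ballI)
  fix x show "isCont (D 0) x" using assms has_vector_derivative_continuous by blast
qed

lemma phi_pt:
  assumes "\<forall>t. norm (phi t) * (1+\<bar>t\<bar>)^2 \<le> C"
  shows "norm (phi t) \<le> C * inverse (1 + t^2)"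
proof -
  have "norm (phi t) * (1 + t^2) \<le> norm (phi t) * (1+\<bar>t\<bar>)^2" by (intro mult_left_mono sq_le) auto
  also have "\<dots> \<le> C" using assms by auto
  finally show ?thesis by (simp add: field_simps add_pos_nonneg)
qed

lemma phi_int:
  assumes "phi \<in> borel_measurable borel" "\<forall>t. norm (phi t) * (1+\<bar>t\<bar>)^2 \<le> C"
  shows "integrable lborel (phi :: real \<Rightarrow> complex)"
proof (rule Bochner_Integration.integrable_bound[of _ "\<lambda>t. C * inverse (1 + t^2)"])
  show "integrable lborel (\<lambda>t. C * inverse (1 + t^2))" using inv_sq_integrable by simp
  show "phi \<in> borel_measurable lborel" using assms by simp
  show "AE x in lborel. norm (phi x) \<le> norm (C * inverse (1 + x^2))"
  proof (rule AE_I2)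
    fix x
    have "norm (phi x) \<le> C * inverse (1 + x^2)" by (rule phi_pt[OF assms(2)])
    then show "norm (phi x) \<le> norm (C * inverse (1 + x^2))" by simp
  qed
qed

lemma sin_nonneg_p:
  assumes "2 * real n \<le> p" "p \<le> 2 * real n + 1"
  shows "sin (pi * p) \<ge> 0"
proof -
  have "sin (pi * p) = sin (2 * real n * pi + pi * (p - 2 * real n))" by (simp add: algebra_simps)
  also have "\<dots> = sin (pi * (p - 2 * real n))" by (simp add: sin_add)
  finally show ?thesis using assms by (simp add: sin_ge_zero)
qed

lemma chirp_norm:
  assumes "sin (pi * p) \<ge> 0"
  shows "norm (chirp p y) \<le> 1"
proof -
  have "Im (cpow p y) \<ge> 0"
    using assms unfolding cpow_def by (auto simp: Im_exp)
  then show ?thesis unfolding chirp_def by simp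
qed

lemma chirp_meas: "chirp p \<in> borel_measurable borel"
  unfolding chirp_def[abs_def] cpow_def by measurable



lemma stft_shift:
  "stft phi u (x, xi) = (LINT t|lborel. u (t + x) * cnj (phi t) * exp (- \<i> * complex_of_real ((t + x) * xi)))"
  unfolding stft_def using lborel_integral_real_affine[of 1 "\<lambda>y. u y * cnj (phi (y - x)) * exp (- \<i> * complex_of_real (y * xi))" x]
  by (simp add: add.commute)

lemma F_bound:
  assumes "sin (pi * p) \<ge> 0"
  shows "norm (chirp p (t + x) * cnj (phi t) * exp (- \<i> * complex_of_real ((t + x) * xi))) \<le> norm (phi t)"
proof -
  have "norm (exp (- \<i> * complex_of_real ((t + x) * xi))) = 1" by simp
  then show ?thesis using chirp_norm[OF assms, of "t + x"]
    by (simp add: norm_mult mult_left_le_one_le)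
qed

lemma F_int:
  assumes "sin (pi * p) \<ge> 0" and pm: "phi \<in> borel_measurable borel" and pi: "integrable lborel (phi :: real \<Rightarrow> complex)"
  shows "integrable lborel (\<lambda>t. chirp p (t + x) * cnj (phi t) * exp (- \<i> * complex_of_real ((t + x) * xi)))"
proof (rule Bochner_Integration.integrable_bound[OF pi])
  have [measurable]: "chirp p \<in> borel_measurable borel" by (rule chirp_meas)
  have [measurable]: "phi \<in> borel_measurable borel" by (rule pm)
  have cc: "cnj \<in> borel_measurable borel"
    by (intro borel_measurable_continuous_onI continuous_intros)
  have [measurable]: "(\<lambda>t. cnj (phi t)) \<in> borel_measurable borel"
    using measurable_compose[OF pm cc] by (simp add: comp_def)
  have [measurable]: "(\<lambda>t. exp (- \<i> * complex_of_real ((t + x) * xi))) \<in> borel_measurable borel"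
    by (intro borel_measurable_continuous_onI continuous_intros)
  show "(\<lambda>t. chirp p (t + x) * cnj (phi t) * exp (- \<i> * complex_of_real ((t + x) * xi))) \<in> borel_measurable lborel"
    by measurable
  show "AE t in lborel. norm (chirp p (t + x) * cnj (phi t) * exp (- \<i> * complex_of_real ((t + x) * xi))) \<le> norm (phi t)"
    using F_bound[OF assms(1)] by auto
qed

lemma total_bound:
  assumes "sin (pi * p) \<ge> 0" and pm: "phi \<in> borel_measurable borel" and pi: "integrable lborel (phi :: real \<Rightarrow> complex)"
  shows "norm (stft phi (chirp p) (x, xi)) \<le> (LINT t|lborel. norm (phi t))"
proof -
  have "norm (stft phi (chirp p) (x, xi)) \<le> (LINT t|lborel. norm (chirp p (t + x) * cnj (phi t) * exp (- \<i> * complex_of_real ((t + x) * xi))))"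
    unfolding stft_shift by (rule integral_norm_bound)
  also have "\<dots> \<le> (LINT t|lborel. norm (phi t))"
    using F_int[OF assms] pi F_bound[OF assms(1)] by (intro integral_mono) auto
  finally show ?thesis .
qed


lemma tail_pt:
  fixes r :: real
  assumes r1: "1 \<le> r" and tS: "t \<notin> {-r/2..r/2}" and Cb: "norm (phi t) * (1+\<bar>t\<bar>)^(N+2) \<le> Cb"
  shows "norm (phi t) \<le> 2^N * Cb / r^N * inverse (1 + t^2)"
proof -
  have tr: "r/2 \<le> \<bar>t\<bar>" using tS by auto
  have "r^N = 2^N * (r/2)^N" by (simp add: power_divide)
  also have "\<dots> \<le> 2^N * (1+\<bar>t\<bar>)^N" using tr r1 by (intro mult_left_mono power_mono) auto
  finally have rN: "r^N \<le> 2^N * (1+\<bar>t\<bar>)^N" .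
  have "norm (phi t) * r^N * (1 + t^2) \<le> norm (phi t) * (2^N * (1+\<bar>t\<bar>)^N) * (1+\<bar>t\<bar>)^2"
    using rN sq_le[of t] by (intro mult_mono mult_left_mono) auto
  also have "\<dots> = 2^N * (norm (phi t) * (1+\<bar>t\<bar>)^(N+2))" by (simp add: power_add mult_ac power2_eq_square)
  also have "\<dots> \<le> 2^N * Cb" using Cb by (intro mult_left_mono) auto
  finally have "norm (phi t) * r^N * (1 + t^2) \<le> 2^N * Cb" .
  moreover have pos: "0 < r^N * (1 + t^2)" using r1 by (auto simp: add_pos_nonneg)
  ultimately have "norm (phi t) \<le> 2^N * Cb / (r^N * (1 + t^2))"
    by (subst pos_le_divide_eq[OF pos]) (simp add: mult_ac)
  then show ?thesis by (simp add: divide_inverse mult_ac)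
qed

locale chs2 = chs +
  fixes phi :: "real \<Rightarrow> complex" and D :: "nat \<Rightarrow> real \<Rightarrow> complex"
  assumes D0: "D 0 = phi" and dD: "\<forall>k x. (D k has_vector_derivative D (Suc k) x) (at x)"
    and bD: "\<forall>k m. \<exists>C. \<forall>t. norm (D k t) * (1+\<bar>t\<bar>)^m \<le> C"
    and chirp_eq: "\<forall>y. s*y > 0 \<longrightarrow> chirp p y = exp (\<i> * (\<gamma> * of_real ((s*y) powr p)))"
    and sinp: "sin (pi*p) \<ge> 0"
begin

lemma pm: "phi \<in> borel_measurable borel" using phi_meas[OF dD] D0 by simp

lemma pint: "integrable lborel phi"
proof -
  obtain C where "\<forall>t. norm (D 0 t) * (1+\<bar>t\<bar>)^2 \<le> C" using bD by blast
  then show ?thesis using phi_int[OF pm] D0 by auto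
qed

lemma F_eq:
  assumes "w \<in> W" "\<bar>t\<bar> < 3/4*\<bar>fst w\<bar>"
  shows "chirp p (t + fst w) * cnj (phi t) * exp (- \<i> * complex_of_real ((t + fst w) * snd w)) = E w t * cnj (D 0 t)"
proof -
  have "s * (t + fst w) > 0" using yy_ge[OF assms] unfolding yy_def by simp
  then have c: "chirp p (t + fst w) = exp (\<i> * (\<gamma> * of_real (yy w t powr p)))"
    using chirp_eq unfolding yy_def by auto
  have "exp (\<i> * (\<gamma> * of_real (yy w t powr p))) * exp (- \<i> * complex_of_real ((t + fst w) * snd w)) = E w t"
    unfolding E_def by (simp add: exp_add[symmetric] algebra_simps)
  then show ?thesis unfolding c D0 by (metis mult.assoc mult.commute)
qed

lemma main_W: "\<exists>C. \<forall>w\<in>W. norm (stft phi (chirp p) w) * \<bar>fst w\<bar>^N \<le> C"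
proof -
  obtain C1 where C1: "\<forall>w\<in>W. norm (integral {-\<bar>fst w\<bar>/2..\<bar>fst w\<bar>/2} (\<lambda>t. E w t * cnj (D 0 t))) * \<bar>fst w\<bar>^(Suc N) \<le> C1 * \<bar>fst w\<bar>"
    using decay[OF dD bD] by blast
  obtain Cb where Cb: "\<forall>t. norm (D 0 t) * (1+\<bar>t\<bar>)^(N+2) \<le> Cb" using bD by blast
  have Cb0: "0 \<le> Cb" using Cb[rule_format, of 0] by (smt (verit) norm_ge_zero mult_nonneg_nonneg zero_le_power)
  have "norm (stft phi (chirp p) w) * \<bar>fst w\<bar>^N \<le> C1 + 2^N * Cb * pi" if w: "w \<in> W" for w
  proof -
    obtain x xi where wx: "w = (x, xi)" by (cases w)
    define r where "r = \<bar>x\<bar>"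
    have r1: "1 \<le> r" using W1 w wx r_def by auto
    define S where "S = {-r/2..r/2}"
    define F where "F = (\<lambda>t. chirp p (t + x) * cnj (phi t) * exp (- \<i> * complex_of_real ((t + x) * xi)))"
    have Fi: "integrable lborel F" unfolding F_def by (rule F_int[OF sinp pm pint])
    have Si: "integrable lborel (\<lambda>t. indicator S t *\<^sub>R F t)" by (rule integrable_mult_indicator) (auto simp: S_def Fi)
    have Ti: "integrable lborel (\<lambda>t. indicator (- S) t *\<^sub>R F t)"
      by (rule integrable_mult_indicator) (auto simp: S_def Fi)
    have split: "(LINT t|lborel. F t) = (LINT t|lborel. indicator S t *\<^sub>R F t) + (LINT t|lborel. indicator (- S) t *\<^sub>R F t)"
    proof -
      have "(LINT t|lborel. F t) = (LINT t|lborel. indicator S t *\<^sub>R F t + indicator (- S) t *\<^sub>R F t)"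
        by (intro Bochner_Integration.integral_cong) (auto split: split_indicator)
      also have "\<dots> = (LINT t|lborel. indicator S t *\<^sub>R F t) + (LINT t|lborel. indicator (- S) t *\<^sub>R F t)"
        by (rule Bochner_Integration.integral_add[OF Si Ti])
      finally show ?thesis .
    qed
    have Seq: "(LINT t|lborel. indicator S t *\<^sub>R F t) = integral S (\<lambda>t. E w t * cnj (D 0 t))"
    proof -
      have "(LINT t|lborel. indicator S t *\<^sub>R F t) = integral S F"
        using set_borel_integral_eq_integral(2)[of S F] Si
        by (simp add: set_integrable_def set_lebesgue_integral_def)
      also have "\<dots> = integral S (\<lambda>t. E w t * cnj (D 0 t))"
      proof (rule integral_cong)
        fix t assume "t \<in> S"
        then have "\<bar>t\<bar> < 3/4*\<bar>fst w\<bar>" using int_in_ball[OF r1] unfolding S_def r_def wx by auto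
        then show "F t = E w t * cnj (D 0 t)" using F_eq[OF w] unfolding F_def wx by auto
      qed
      finally show ?thesis .
    qed
    have main: "norm (integral S (\<lambda>t. E w t * cnj (D 0 t))) * r^N \<le> C1"
    proof -
      have h: "norm (integral {-\<bar>fst w\<bar>/2..\<bar>fst w\<bar>/2} (\<lambda>t. E w t * cnj (D 0 t))) * \<bar>fst w\<bar>^(Suc N) \<le> C1 * \<bar>fst w\<bar>"
        using bspec[OF C1 w] .
      have "norm (integral S (\<lambda>t. E w t * cnj (D 0 t))) * r^N * r \<le> C1 * r"
        using h unfolding S_def r_def wx fst_conv by (simp add: mult_ac)
      then show ?thesis using r1 by simp
    qed
    have tail: "norm (LINT t|lborel. indicator (- S) t *\<^sub>R F t) * r^N \<le> 2^N * Cb * pi"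
    proof -
      have "norm (LINT t|lborel. indicator (- S) t *\<^sub>R F t) \<le> (LINT t|lborel. norm (indicator (- S) t *\<^sub>R F t))"
        by (rule integral_norm_bound)
      also have "\<dots> \<le> (LINT t|lborel. (2^N * Cb / r^N) * inverse (1 + t^2))"
      proof (rule integral_mono)
        show "integrable lborel (\<lambda>t. norm (indicator (- S) t *\<^sub>R F t))" using integrable_norm[OF Ti] .
        show "integrable lborel (\<lambda>t. (2^N * Cb / r^N) * inverse (1 + t^2))" using inv_sq_integrable by simp
        fix t
        show "norm (indicator (- S) t *\<^sub>R F t) \<le> (2^N * Cb / r^N) * inverse (1 + t^2)"
        proof (cases "t \<in> S")
          case True
          then show ?thesis using Cb0 r1 by (simp add: add_pos_nonneg)
        next
          case False
          have "norm (F t) \<le> norm (phi t)" unfolding F_def by (rule F_bound[OF sinp])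
          also have "\<dots> \<le> 2^N * Cb / r^N * inverse (1 + t^2)"
            using tail_pt[OF r1, of t phi N Cb] False Cb D0 unfolding S_def by auto
          finally show ?thesis using False by simp
        qed
      qed
      also have "\<dots> = (2^N * Cb / r^N) * pi" using inv_sq_integral by simp
      finally show ?thesis using r1 by (simp add: field_simps)
    qed
    have "norm (stft phi (chirp p) w) = norm (integral S (\<lambda>t. E w t * cnj (D 0 t)) + (LINT t|lborel. indicator (- S) t *\<^sub>R F t))"
      unfolding wx stft_shift F_def[symmetric] split Seq ..
    then have "norm (stft phi (chirp p) w) * r^N \<le> (norm (integral S (\<lambda>t. E w t * cnj (D 0 t))) + norm (LINT t|lborel. indicator (- S) t *\<^sub>R F t)) * r^N"
      using r1 by (intro mult_right_mono) (auto intro: norm_triangle_ineq)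
    also have "\<dots> \<le> C1 + 2^N * Cb * pi" using main tail by (simp add: algebra_simps)
    finally show ?thesis unfolding r_def wx by simp
  qed
  then show ?thesis by blast
qed

end



lemma jbr_eq: "jbr (x, xi) = sqrt (1 + x^2 + xi^2)"
  unfolding jbr_def norm_Pair by (simp add: add.assoc)

lemma jbr_ge1: "1 \<le> jbr z"
  unfolding jbr_def by simp

lemma cone_bound:
  fixes s A :: real and \<gamma> :: complex
  assumes p2: "p > 2" and sinp: "sin (pi*p) \<ge> 0"
    and D0: "D 0 = phi" and dD: "\<forall>k x. (D k has_vector_derivative D (Suc k) x) (at x)"
    and bD: "\<forall>k m. \<exists>C. \<forall>t. norm (D k t) * (1+\<bar>t\<bar>)^m \<le> C"
    and s: "s = 1 \<or> s = -1" and g1: "norm \<gamma> = 1" and gIm: "Im \<gamma> \<ge> 0"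
    and chirp_eq: "\<forall>y. s*y > 0 \<longrightarrow> chirp p y = exp (\<i> * (\<gamma> * of_real ((s*y) powr p)))"
    and A0: "A \<ge> 0" and Nr: "Nr \<ge> 0"
  shows "\<exists>C. \<forall>x xi. s*x > 0 \<and> \<bar>xi\<bar> < A*(s*x) \<longrightarrow> jbr (x,xi) powr Nr * norm (stft phi (chirp p) (x,xi)) \<le> C"
proof -
  define K' where "K' = (4*(A+1)/p) powr (1/(p-2))"
  define R where "R = 4 * max 1 K'"
  have R4: "R \<ge> 4" unfolding R_def by simp
  have HR: "A + 1 \<le> p * (R/4) powr (p-2) / 4"
  proof -
    have K'0: "0 \<le> K'" unfolding K'_def by simp
    have "(R/4) powr (p-2) \<ge> K' powr (p-2)" unfolding R_def using K'0 p2 by (intro powr_mono2) auto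
    moreover have "K' powr (p-2) = 4*(A+1)/p"
      unfolding K'_def using p2 A0 by (simp add: powr_powr)
    ultimately have "(R/4) powr (p-2) \<ge> 4*(A+1)/p" by simp
    then have "p * (R/4) powr (p-2) \<ge> p * (4*(A+1)/p)" using p2 by (intro mult_left_mono) auto
    then show ?thesis using p2 by simp
  qed
  interpret chs2 p s A R \<gamma> phi D
    by unfold_locales (use p2 s g1 gIm A0 R4 HR D0 dD bD chirp_eq sinp in auto)
  define M where "M = nat \<lceil>Nr\<rceil>"
  have NM: "Nr \<le> real M" unfolding M_def by linarith
  obtain CM where CM: "\<forall>w\<in>W. norm (stft phi (chirp p) w) * \<bar>fst w\<bar>^M \<le> CM" using main_W by blast
  define K where "K = (LINT t|lborel. norm (phi t))"
  define J where "J = sqrt (1 + R^2 + (A*R)^2)"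
  have "jbr (x,xi) powr Nr * norm (stft phi (chirp p) (x,xi)) \<le> max ((2+A)^M * CM) (J powr Nr * K)"
    if xs: "s*x > 0" "\<bar>xi\<bar> < A*(s*x)" for x xi
  proof (cases "s * x \<ge> R")
    case True
    have sx: "s * x = \<bar>x\<bar>" using xs s by auto
    have w: "(x, xi) \<in> W" unfolding W_def using True xs sx by auto
    have x1: "\<bar>x\<bar> \<ge> 1" using True R4 sx by auto
    have jb: "jbr (x,xi) \<le> (2+A)*\<bar>x\<bar>"
    proof -
      have "\<bar>xi\<bar>^2 \<le> (A*\<bar>x\<bar>)^2" using xs sx by (intro power_mono) auto
      then have "xi^2 \<le> (A*\<bar>x\<bar>)^2" by simp
      moreover have "1 \<le> x^2"
      proof -
        have "1^2 \<le> \<bar>x\<bar>^2" using x1 by (intro power_mono) auto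
        then show ?thesis by simp
      qed
      moreover have "((2+A)*\<bar>x\<bar>)^2 = 4 * x^2 + 4*A*x^2 + (A*\<bar>x\<bar>)^2" by (simp add: power2_eq_square algebra_simps)
      moreover have "0 \<le> A * x^2" using A0 by simp
      ultimately have "1 + x^2 + xi^2 \<le> ((2+A)*\<bar>x\<bar>)^2" by linarith
      then have "sqrt (1 + x^2 + xi^2) \<le> sqrt (((2+A)*\<bar>x\<bar>)^2)" by (rule real_sqrt_le_mono)
      then show ?thesis using A0 by (simp add: jbr_eq)
    qed
    have j0: "0 < jbr (x,xi)" using jbr_ge1[of "(x,xi)"] by linarith
    have "jbr (x,xi) powr Nr \<le> jbr (x,xi) powr (real M)" using jbr_ge1 NM by (intro powr_mono) auto
    also have "\<dots> = jbr (x,xi) ^ M" using j0 by (intro powr_realpow)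
    also have "\<dots> \<le> ((2+A)*\<bar>x\<bar>)^M" using jb j0 by (intro power_mono) auto
    finally have j: "jbr (x,xi) powr Nr \<le> (2+A)^M * \<bar>x\<bar>^M" by (simp add: power_mult_distrib)
    have "jbr (x,xi) powr Nr * norm (stft phi (chirp p) (x,xi)) \<le> (2+A)^M * \<bar>x\<bar>^M * norm (stft phi (chirp p) (x,xi))"
      using j by (intro mult_right_mono) auto
    also have "\<dots> = (2+A)^M * (norm (stft phi (chirp p) (x,xi)) * \<bar>x\<bar>^M)" by simp
    also have "\<dots> \<le> (2+A)^M * CM" using CM w A0 by (intro mult_left_mono) auto
    finally show ?thesis by simp
  next
    case False
    have sx: "s * x = \<bar>x\<bar>" using xs s by auto
    have xR: "\<bar>x\<bar> \<le> R" using False sx by simp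
    have "xi^2 \<le> (A*R)^2"
    proof -
      have "\<bar>xi\<bar> \<le> A * R" using xs sx xR A0 by (smt (verit) mult_left_mono)
      then have "\<bar>xi\<bar>^2 \<le> (A*R)^2" by (intro power_mono) auto
      then show ?thesis by simp
    qed
    moreover have "x^2 \<le> R^2"
    proof -
      have "\<bar>x\<bar>^2 \<le> R^2" using xR by (intro power_mono) auto
      then show ?thesis by simp
    qed
    ultimately have "1 + x^2 + xi^2 \<le> 1 + R^2 + (A*R)^2" by linarith
    then have jb: "jbr (x,xi) \<le> J" unfolding J_def jbr_eq by (rule real_sqrt_le_mono)
    have "jbr (x,xi) powr Nr \<le> J powr Nr" using jb jbr_ge1 Nr by (intro powr_mono2) (auto simp: jbr_def)
    moreover have "norm (stft phi (chirp p) (x,xi)) \<le> K" unfolding K_def by (rule total_bound[OF sinp pm pint])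
    ultimately have "jbr (x,xi) powr Nr * norm (stft phi (chirp p) (x,xi)) \<le> J powr Nr * K"
      by (intro mult_mono) auto
    then show ?thesis by simp
  qed
  then show ?thesis by blast
qed


theorem proposition8p2:
  fixes p :: real and n :: nat and phi :: "real \<Rightarrow> complex"
  assumes "p > 2" and "2 * real n \<le> p" and "p \<le> 2 * real n + 1"
    and "schwartz phi" and "phi \<noteq> (\<lambda>_. 0)"
  shows "gabor_WF phi (chirp p) \<subseteq> {(x, xi). x = 0 \<and> xi \<noteq> 0}"
proof
  fix z0 assume z0: "z0 \<in> gabor_WF phi (chirp p)"
  obtain x0 xi0 where z0e: "z0 = (x0, xi0)" by (cases z0)
  have nz: "z0 \<noteq> 0" and nG: "\<not> (\<exists>G. open_conic G \<and> z0 \<in> G \<and>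
      (\<forall>N::real. N \<ge> 0 \<longrightarrow> (\<exists>C. \<forall>z\<in>G. jbr z powr N * norm (stft phi (chirp p) z) \<le> C)))"
    using z0 unfolding gabor_WF_def by auto
  obtain D where D0: "D 0 = phi" and dD: "\<forall>k x. (D k has_vector_derivative D (Suc k) x) (at x)"
    and bD: "\<forall>k m. \<exists>C. \<forall>t. norm (D k t) * (1+\<bar>t\<bar>)^m \<le> C"
    using schwartz_facts[OF assms(4)] by blast
  have sinp: "sin (pi*p) \<ge> 0" using sin_nonneg_p[OF assms(2,3)] .
  have "x0 = 0"
  proof (rule ccontr)
    assume x0: "x0 \<noteq> 0"
    define s :: real where "s = (if x0 > 0 then 1 else -1)"
    define \<gamma> where "\<gamma> = (if x0 > 0 then 1 else exp (\<i> * complex_of_real (pi * p)))"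
    define A where "A = \<bar>xi0\<bar>/\<bar>x0\<bar> + 1"
    define G where "G = {z. 0 < s * fst z \<and> \<bar>snd z\<bar> < A * (s * fst z)}"
    have s: "s = 1 \<or> s = -1" unfolding s_def by auto
    have g1: "norm \<gamma> = 1" unfolding \<gamma>_def by simp
    have gIm: "Im \<gamma> \<ge> 0" unfolding \<gamma>_def using sinp by (simp add: Im_exp)
    have ceq: "\<forall>y. s*y > 0 \<longrightarrow> chirp p y = exp (\<i> * (\<gamma> * of_real ((s*y) powr p)))"
    proof (intro allI impI)
      fix y assume sy: "s*y > 0"
      show "chirp p y = exp (\<i> * (\<gamma> * of_real ((s*y) powr p)))"
      proof (cases "x0 > 0")
        case True
        then have "y > 0" "s = 1" "\<gamma> = 1" using sy unfolding s_def \<gamma>_def by auto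
        then show ?thesis unfolding chirp_def cpow_def by simp
      next
        case False
        then have "y < 0" "s = -1" "\<gamma> = exp (\<i> * complex_of_real (pi * p))" using sy unfolding s_def \<gamma>_def by auto
        then show ?thesis unfolding chirp_def cpow_def by simp
      qed
    qed
    have A0: "A \<ge> 0" unfolding A_def by simp
    have sx0: "s * x0 = \<bar>x0\<bar>" unfolding s_def by auto
    have oc: "open_conic G"
    proof -
      have "open G"
        unfolding G_def Collect_conj_eq
        by (intro open_Int open_Collect_less continuous_intros)
      moreover have "0 \<notin> G" unfolding G_def by simp
      moreover have "\<forall>z\<in>G. \<forall>t>0. t *\<^sub>R z \<in> G"
      proof (intro ballI allI impI)
        fix z :: "real \<times> real" and t :: real assume "z \<in> G" "t > 0"
        then have h: "0 < s * fst z" "\<bar>snd z\<bar> < A * (s * fst z)" unfolding G_def by auto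
        have "0 < t * (s * fst z)" using h \<open>t > 0\<close> by simp
        moreover have "t * \<bar>snd z\<bar> < t * (A * (s * fst z))" using h \<open>t > 0\<close> by simp
        ultimately show "t *\<^sub>R z \<in> G" unfolding G_def using \<open>t > 0\<close>
          by (simp add: abs_mult algebra_simps)
      qed
      ultimately show ?thesis unfolding open_conic_def by blast
    qed
    have zG: "z0 \<in> G"
    proof -
      have "A * \<bar>x0\<bar> = \<bar>xi0\<bar> + \<bar>x0\<bar>" unfolding A_def using x0 by (simp add: distrib_right)
      moreover have "0 < \<bar>x0\<bar>" using x0 by simp
      ultimately have "\<bar>xi0\<bar> < A * \<bar>x0\<bar>" by linarith
      moreover have "0 < \<bar>x0\<bar>" using x0 by simp
      ultimately show ?thesis unfolding G_def z0e using sx0 by simp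
    qed
    have "\<forall>N::real. N \<ge> 0 \<longrightarrow> (\<exists>C. \<forall>z\<in>G. jbr z powr N * norm (stft phi (chirp p) z) \<le> C)"
    proof (intro allI impI)
      fix N :: real assume N: "N \<ge> 0"
      obtain C where C: "\<forall>x xi. s*x > 0 \<and> \<bar>xi\<bar> < A*(s*x) \<longrightarrow> jbr (x,xi) powr N * norm (stft phi (chirp p) (x,xi)) \<le> C"
        using cone_bound[OF assms(1) sinp D0 dD bD s g1 gIm ceq A0 N] by blast
      have "jbr z powr N * norm (stft phi (chirp p) z) \<le> C" if "z \<in> G" for z
        using that C unfolding G_def by (cases z) auto
      then show "\<exists>C. \<forall>z\<in>G. jbr z powr N * norm (stft phi (chirp p) z) \<le> C" by blast
    qed
    then show False using nG oc zG by blast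
  qed
  moreover have "xi0 \<noteq> 0" using nz z0e \<open>x0 = 0\<close> by (simp add: zero_prod_def)
  ultimately show "z0 \<in> {(x, xi). x = 0 \<and> xi \<noteq> 0}" using z0e by simp
qed


end
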